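(* Let $Q\in T_{d,n}\cap V_{d,n,\mathrm{gen}}$. Then the tangent space to $V_{d,n}$ at $Q$ is \[ \{Z\in M_n^d : [Q^r,Z^s]=[Q^s,Z^r]\ \ \forall\, 1\le r\ne s\le d\}, \] and the tangent space to $T_{d,n}$ at $Q$ is the set of $Z\in T_{d,n}$ satisfying the same equations. The real dimension of the first tangent space is $2n^2+2(d-1)n$ and of the second is $n^2+(2d-1)n$.
   Context: $M_n$ denotes the $n\times n$ complex matrices and $[A,B]=AB-BA$. $V_{d,n}$ is the set of $d$-tuples of pairwise commuting matrices in $M_n$; $V_{d,n,\mathrm{gen}}$ is the set of $X\in V_{d,n}$ each of whose components $X^r$ has $n$ distinct eigenvalues. $T_{d,n}$ is the set of commuting $d$-tuples of $n\times n$ matrices that are upper triangular with respect to a fixed basis. *)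

theory Defs
  imports "HOL-Analysis.Analysis"
begin

text \<open>n x n complex matrices are complex^'n^'n (row i, column j is A$i$j);
  d-tuples of matrices are (complex^'n^'n)^'d, a finite-dimensional real vector space.\<close>

definition commutator :: "complex^'n^'n \<Rightarrow> complex^'n^'n \<Rightarrow> complex^'n^'n" where
  "commutator A B = A ** B - B ** A"

definition eigenvalues :: "complex^'n^'n \<Rightarrow> complex set" where
  "eigenvalues A = {c. \<exists>v. v \<noteq> 0 \<and> A *v v = c *s v}"

definition upper_triangular :: "complex^('n::{finite,linorder})^('n::{finite,linorder}) \<Rightarrow> bool" where
  "upper_triangular A \<longleftrightarrow> (\<forall>i j. j < i \<longrightarrow> A $ i $ j = 0)"

definition Vdn :: "((complex^'n^'n)^'d) set" where
  "Vdn = {X. \<forall>r s. X $ r ** X $ s = X $ s ** X $ r}"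

definition Vdn_gen :: "((complex^'n^'n)^'d) set" where
  "Vdn_gen = {X. X \<in> Vdn \<and> (\<forall>r. card (eigenvalues (X $ r)) = CARD('n))}"

definition Tdn :: "((complex^('n::{finite,linorder})^('n::{finite,linorder}))^'d) set" where
  "Tdn = {X. X \<in> Vdn \<and> (\<forall>r. upper_triangular (X $ r))}"

definition tangent_space :: "'a::real_normed_vector set \<Rightarrow> 'a \<Rightarrow> 'a set" where
  "tangent_space S x = {v. \<exists>\<gamma>::real \<Rightarrow> 'a. \<gamma> 0 = x \<and> (\<forall>t. \<gamma> t \<in> S) \<and>
                              (\<gamma> has_vector_derivative v) (at 0)}"

end

theory Submission
  imports Defs "HOL-Computational_Algebra.Polynomial"
begin

type_synonym 'n cm = "complex^'n^'n"

definition cmult :: "complex \<Rightarrow> complex^'n^'n \<Rightarrow> complex^'n^'n" where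
  "cmult c M = (\<chi> i j. c * M$i$j)"

primrec mpow :: "complex^'n^'n \<Rightarrow> nat \<Rightarrow> complex^'n^'n" where
  "mpow M 0 = mat 1"
| "mpow M (Suc k) = mpow M k ** M"

definition meval :: "complex poly \<Rightarrow> complex^'n^'n \<Rightarrow> complex^'n^'n" where
  "meval p M = (\<Sum>k\<le>degree p. cmult (coeff p k) (mpow M k))"

definition diagv :: "complex^'n^'n \<Rightarrow> complex^'n" where
  "diagv M = (\<chi> i. M$i$i)"

lemma matrix_add_rdistrib': "(B + C) ** (A::'a::semiring_1^'n^'n) = B ** A + C ** A"
  by (vector matrix_matrix_mult_def sum.distrib[symmetric] field_simps)

lemma matrix_diff_ldistrib: "(A::'a::ring_1^'n^'n) ** (B - C) = A ** B - A ** C"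
  by (vector matrix_matrix_mult_def sum_subtractf[symmetric] field_simps)

lemma matrix_diff_rdistrib: "(B - C) ** (A::'a::ring_1^'n^'n) = B ** A - C ** A"
  by (vector matrix_matrix_mult_def sum_subtractf[symmetric] field_simps)

lemma matrix_sum_left: "(\<Sum>k\<in>S. f k) ** (A::'a::semiring_1^'n^'n) = (\<Sum>k\<in>S. f k ** A)"
  by (induction S rule: infinite_finite_induct) (auto simp: matrix_add_rdistrib')

lemma matrix_sum_right: "(A::'a::semiring_1^'n^'n) ** (\<Sum>k\<in>S. f k) = (\<Sum>k\<in>S. A ** f k)"
  by (induction S rule: infinite_finite_induct) (auto simp: matrix_add_ldistrib)

lemma cmult_left: "cmult c M ** N = cmult c (M ** N)"
  by (simp add: cmult_def matrix_matrix_mult_def vec_eq_iff sum_distrib_left mult.assoc)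

lemma cmult_right: "M ** cmult c N = cmult c (M ** N)"
  by (simp add: cmult_def matrix_matrix_mult_def vec_eq_iff sum_distrib_left mult_ac)

lemma cmult_sum: "cmult c (\<Sum>k\<in>S. f k) = (\<Sum>k\<in>S. cmult c (f k))"
  by (induction S rule: infinite_finite_induct) (auto simp: cmult_def vec_eq_iff distrib_left)

lemma cmult_cmult: "cmult c (cmult d X) = cmult d (cmult c X)"
  by (simp add: cmult_def vec_eq_iff mult_ac)

lemma mpow_add: "mpow M (i + j) = mpow M i ** mpow M j"
  by (induction j) (auto simp: matrix_mul_assoc)

lemma mpow_comm: "mpow M i ** mpow M j = mpow M j ** mpow M i"
  by (metis mpow_add add.commute)

lemma meval_comm: "meval p M ** meval q M = meval q M ** meval p M"
  unfolding meval_def matrix_sum_left matrix_sum_right cmult_left cmult_right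
  apply (simp add: cmult_sum)
  apply (subst sum.swap)
  by (metis (no_types, lifting) cmult_cmult mpow_comm sum.cong)

lemma mpow_M_comm: "M ** mpow M j = mpow M j ** M"
  using mpow_comm[of M 1 j] by simp

lemma meval_M_comm: "M ** meval p M = meval p M ** M"
  unfolding meval_def matrix_sum_left matrix_sum_right cmult_left cmult_right
  by (simp add: mpow_M_comm)

lemma meval_X: "meval [:0,1:] M = M"
  by (simp add: meval_def cmult_def vec_eq_iff)

lemma meval_0: "meval 0 M = 0"
  by (simp add: meval_def cmult_def vec_eq_iff)

lemma sum_single:
  fixes f :: "'a::finite \<Rightarrow> 'b::comm_monoid_add"
  assumes "\<And>k. k \<noteq> i \<Longrightarrow> f k = 0"
  shows "(\<Sum>k\<in>UNIV. f k) = f i"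
proof -
  have "(\<Sum>k\<in>UNIV. f k) = f i + (\<Sum>k\<in>UNIV-{i}. f k)"
    by (simp add: sum.remove)
  also have "(\<Sum>k\<in>UNIV-{i}. f k) = 0"
    by (rule sum.neutral) (use assms in auto)
  finally show ?thesis by simp
qed

lemma ut_mult:
  fixes M N :: "complex^('n::{finite,linorder})^('n::{finite,linorder})"
  assumes M: "upper_triangular M" and N: "upper_triangular N"
  shows "upper_triangular (M ** N)"
  unfolding upper_triangular_def
proof (intro allI impI)
  fix i j :: 'n assume ji: "j < i"
  have "M$i$k * N$k$j = 0" for k
  proof (cases "k < i")
    case True then show ?thesis using M unfolding upper_triangular_def by simp
  next
    case False then have "j < k" using ji by auto
    then show ?thesis using N unfolding upper_triangular_def by simp
  qed
  then show "(M ** N)$i$j = 0" unfolding matrix_matrix_mult_def vec_lambda_beta by (intro sum.neutral) blast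
qed

lemma ut_mult_diag:
  fixes M N :: "complex^('n::{finite,linorder})^('n::{finite,linorder})"
  assumes M: "upper_triangular M" and N: "upper_triangular N"
  shows "(M ** N)$i$i = M$i$i * N$i$i"
proof -
  have "(M ** N)$i$i = (\<Sum>k\<in>UNIV. M$i$k * N$k$i)" by (simp add: matrix_matrix_mult_def)
  also have "\<dots> = M$i$i * N$i$i"
  proof (rule sum_single)
    fix k assume "k \<noteq> i"
    then consider "k < i" | "i < k" by (meson linorder_neq_iff)
    then show "M$i$k * N$k$i = 0"
      by cases (use M N in \<open>auto simp: upper_triangular_def\<close>)
  qed
  finally show ?thesis .
qed

lemma ut_mat: "upper_triangular (mat c :: complex^('n::{finite,linorder})^('n::{finite,linorder}))"
  by (auto simp: upper_triangular_def mat_def)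

lemma ut_add: "upper_triangular M \<Longrightarrow> upper_triangular N \<Longrightarrow> upper_triangular (M + N)"
  by (auto simp: upper_triangular_def)

lemma ut_diff: "upper_triangular M \<Longrightarrow> upper_triangular N \<Longrightarrow> upper_triangular (M - N)"
  by (auto simp: upper_triangular_def)

lemma ut_scaleR: "upper_triangular M \<Longrightarrow> upper_triangular (c *\<^sub>R M)"
  by (auto simp: upper_triangular_def)

lemma ut_cmult: "upper_triangular M \<Longrightarrow> upper_triangular (cmult c M)"
  by (auto simp: upper_triangular_def cmult_def)

lemma ut_zero: "upper_triangular 0"
  by (auto simp: upper_triangular_def)

lemma ut_sum: "(\<And>k. k \<in> S \<Longrightarrow> upper_triangular (f k)) \<Longrightarrow> upper_triangular (\<Sum>k\<in>S. f k)"
  by (induction S rule: infinite_finite_induct) (auto simp: ut_zero ut_add)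

lemma ut_mpow: "upper_triangular M \<Longrightarrow> upper_triangular (mpow M k)"
  by (induction k) (auto simp: ut_mat ut_mult)

lemma mpow_diag: "upper_triangular M \<Longrightarrow> (mpow M k)$i$i = (M$i$i)^k"
  by (induction k) (auto simp: ut_mult_diag ut_mpow mat_def)

lemma ut_meval: "upper_triangular M \<Longrightarrow> upper_triangular (meval p M)"
  unfolding meval_def by (intro ut_sum ut_cmult ut_mpow)

lemma meval_diag: "upper_triangular M \<Longrightarrow> (meval p M)$i$i = poly p (M$i$i)"
  by (simp add: meval_def cmult_def mpow_diag poly_altdef)

lemma lagrange:
  fixes a b :: "'n::finite \<Rightarrow> complex"
  assumes inj: "inj a"
  shows "\<exists>p. \<forall>i. poly p (a i) = b i"
proof -
  define L where "L i = (\<Prod>j\<in>UNIV-{i}. [:- a j, 1:])" for i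
  define p where "p = (\<Sum>i\<in>UNIV. smult (b i / (\<Prod>j\<in>UNIV-{i}. (a i - a j))) (L i))"
  have PL: "poly (L i) x = (\<Prod>j\<in>UNIV-{i}. (x - a j))" for i x
    by (simp add: L_def poly_prod)
  have "poly p (a k) = b k" for k
  proof -
    have "poly p (a k) = (\<Sum>i\<in>UNIV. b i / (\<Prod>j\<in>UNIV-{i}. (a i - a j)) * poly (L i) (a k))"
      by (simp add: p_def poly_sum)
    also have "\<dots> = b k / (\<Prod>j\<in>UNIV-{k}. (a k - a j)) * poly (L k) (a k)"
    proof (rule sum_single)
      fix i assume "i \<noteq> k"
      then have "poly (L i) (a k) = 0" unfolding PL
        by (intro prod_zero) auto
      then show "b i / (\<Prod>j\<in>UNIV-{i}. (a i - a j)) * poly (L i) (a k) = 0" by simp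
    qed
    also have "(\<Prod>j\<in>UNIV-{k}. (a k - a j)) \<noteq> 0"
      using inj by (auto simp: inj_eq)
    then have "b k / (\<Prod>j\<in>UNIV-{k}. (a k - a j)) * poly (L k) (a k) = b k"
      by (simp add: PL)
    finally show ?thesis .
  qed
  then show ?thesis by blast
qed

lemma card_Icc_less1:
  fixes i j k :: "'n::{finite,linorder}"
  assumes "j \<le> i" "i < k"
  shows "CARD('n) - card {j..k} < CARD('n) - card {j..i}"
proof -
  have "{j..i} \<subset> {j..k}" using assms by auto
  then have "card {j..i} < card {j..k}" by (simp add: psubset_card_mono)
  moreover have "card {j..k} \<le> CARD('n)" by (simp add: card_mono)
  ultimately show ?thesis by linarith
qed

lemma card_Icc_less2:
  fixes i j k :: "'n::{finite,linorder}"
  assumes "k < j" "j \<le> i"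
  shows "CARD('n) - card {k..i} < CARD('n) - card {j..i}"
proof -
  have "{j..i} \<subset> {k..i}" using assms by auto
  then have "card {j..i} < card {k..i}" by (simp add: psubset_card_mono)
  moreover have "card {k..i} \<le> CARD('n)" by (simp add: card_mono)
  ultimately show ?thesis by linarith
qed

lemma comm_lower_zero:
  fixes A B :: "complex^('n::{finite,linorder})^('n::{finite,linorder})"
  assumes UT: "upper_triangular A" and inj: "inj (\<lambda>i. A$i$i)" and C: "A ** B = B ** A"
  shows "j < i \<Longrightarrow> B$i$j = 0"
proof (induction "CARD('n) - card {j..i}" arbitrary: i j rule: less_induct)
  case (less i j)
  have IH: "B$i'$j' = 0" if "CARD('n) - card {j'..i'} < CARD('n) - card {j..i}" "j' < i'" for i' j'
    using less.hyps that by blast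
  have 1: "(A ** B)$i$j = A$i$i * B$i$j"
    unfolding matrix_matrix_mult_def vec_lambda_beta
  proof (rule sum_single)
    fix k assume "k \<noteq> i"
    then consider "k < i" | "i < k" by (meson linorder_neq_iff)
    then show "A$i$k * B$k$j = 0"
    proof cases
      case 1 then show ?thesis using UT by (simp add: upper_triangular_def)
    next
      case 2
      have "B$k$j = 0"
        by (rule IH) (use 2 less.prems card_Icc_less1[of j i k] in auto)
      then show ?thesis by simp
    qed
  qed
  have 2: "(B ** A)$i$j = B$i$j * A$j$j"
    unfolding matrix_matrix_mult_def vec_lambda_beta
  proof (rule sum_single)
    fix k assume "k \<noteq> j"
    then consider "k < j" | "j < k" by (meson linorder_neq_iff)
    then show "B$i$k * A$k$j = 0"
    proof cases
      case 2 then show ?thesis using UT by (simp add: upper_triangular_def)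
    next
      case 1
      have "B$i$k = 0"
        by (rule IH) (use 1 less.prems card_Icc_less2[of k j i] in auto)
      then show ?thesis by simp
    qed
  qed
  have "A$i$i \<noteq> A$j$j" using inj less.prems by (auto simp: inj_def)
  moreover have "A$i$i * B$i$j = B$i$j * A$j$j" using 1 2 C by metis
  ultimately show ?case by (metis mult.commute mult_cancel_left)
qed

lemma card_Icc_less3:
  fixes i j k :: "'n::{finite,linorder}"
  assumes "i < k" "k \<le> j"
  shows "card {k..j} < card {i..j}"
proof -
  have "{k..j} \<subset> {i..j}" using assms by auto
  then show ?thesis by (simp add: psubset_card_mono)
qed

lemma card_Icc_less4:
  fixes i j k :: "'n::{finite,linorder}"
  assumes "i \<le> k" "k < j"
  shows "card {i..k} < card {i..j}"
proof -
  have "{i..k} \<subset> {i..j}" using assms by auto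
  then show ?thesis by (simp add: psubset_card_mono)
qed

lemma comm_strict_zero:
  fixes A N :: "complex^('n::{finite,linorder})^('n::{finite,linorder})"
  assumes UT: "upper_triangular A" and inj: "inj (\<lambda>i. A$i$i)" and C: "A ** N = N ** A"
    and UN: "upper_triangular N" and D: "\<And>i. N$i$i = 0"
  shows "i < j \<Longrightarrow> N$i$j = 0"
proof (induction "card {i..j}" arbitrary: i j rule: less_induct)
  case (less i j)
  have IH: "N$i'$j' = 0" if "card {i'..j'} < card {i..j}" "i' < j'" for i' j'
    using less.hyps that by blast
  have 1: "(A ** N)$i$j = A$i$i * N$i$j"
    unfolding matrix_matrix_mult_def vec_lambda_beta
  proof (rule sum_single)
    fix k assume "k \<noteq> i"
    then consider "k < i" | "i < k \<and> k < j" | "k = j" | "j < k" by (meson linorder_neq_iff)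
    then show "A$i$k * N$k$j = 0"
    proof cases
      case 1 then show ?thesis using UT by (simp add: upper_triangular_def)
    next
      case 2
      have "N$k$j = 0"
        by (rule IH) (use 2 card_Icc_less3[of i k j] in auto)
      then show ?thesis by simp
    next
      case 3 then show ?thesis using D by simp
    next
      case 4 then show ?thesis using UN by (simp add: upper_triangular_def)
    qed
  qed
  have 2: "(N ** A)$i$j = N$i$j * A$j$j"
    unfolding matrix_matrix_mult_def vec_lambda_beta
  proof (rule sum_single)
    fix k assume "k \<noteq> j"
    then consider "j < k" | "i < k \<and> k < j" | "k = i" | "k < i" by (meson linorder_neq_iff)
    then show "N$i$k * A$k$j = 0"
    proof cases
      case 1 then show ?thesis using UT by (simp add: upper_triangular_def)
    next
      case 2
      have "N$i$k = 0"
        by (rule IH) (use 2 card_Icc_less4[of i k j] in auto)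
      then show ?thesis by simp
    next
      case 3 then show ?thesis using D by simp
    next
      case 4 then show ?thesis using UN by (simp add: upper_triangular_def)
    qed
  qed
  have "A$i$i \<noteq> A$j$j" using inj less.prems by (auto simp: inj_def)
  moreover have "A$i$i * N$i$j = N$i$j * A$j$j" using 1 2 C by metis
  ultimately show ?case by (metis mult.commute mult_cancel_left)
qed

lemma commutant:
  fixes A B :: "complex^('n::{finite,linorder})^('n::{finite,linorder})"
  assumes UT: "upper_triangular A" and inj: "inj (\<lambda>i. A$i$i)" and C: "A ** B = B ** A"
  shows "\<exists>p. B = meval p A"
proof -
  obtain p where p: "\<And>i. poly p (A$i$i) = B$i$i"
    using lagrange[OF inj, of "\<lambda>i. B$i$i"] by blast
  define N where "N = B - meval p A"
  have UB: "upper_triangular B"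
    using comm_lower_zero[OF UT inj C] by (auto simp: upper_triangular_def)
  have UN: "upper_triangular N" unfolding N_def by (intro ut_diff UB ut_meval UT)
  have D: "N$i$i = 0" for i by (simp add: N_def meval_diag[OF UT] p)
  have CN: "A ** N = N ** A"
    by (simp add: N_def matrix_diff_ldistrib matrix_diff_rdistrib C meval_M_comm)
  have "N$i$j = 0" for i j
  proof -
    consider "i < j" | "i = j" | "j < i" by (meson linorder_neq_iff)
    then show ?thesis
      by cases (use comm_strict_zero[OF UT inj CN UN D] D UN in \<open>auto simp: upper_triangular_def\<close>)
  qed
  then have "N = 0" by (simp add: vec_eq_iff)
  then show ?thesis unfolding N_def by auto
qed

lemma bilinear_mm: "bilinear ((**) :: complex^'n^'n \<Rightarrow> complex^'n^'n \<Rightarrow> complex^'n^'n)"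
  unfolding bilinear_def
  by (auto intro!: linearI simp: matrix_add_ldistrib matrix_add_rdistrib' scalar_matrix_assoc matrix_scalar_ac)

lemma bb_mm: "bounded_bilinear ((**) :: complex^'n^'n \<Rightarrow> complex^'n^'n \<Rightarrow> complex^'n^'n)"
  using bilinear_mm bilinear_conv_bounded_bilinear by blast

lemma deriv_mm:
  fixes f g :: "real \<Rightarrow> complex^'n^'n"
  assumes "(f has_vector_derivative f') (at x)" "(g has_vector_derivative g') (at x)"
  shows "((\<lambda>t. f t ** g t) has_vector_derivative (f x ** g' + f' ** g x)) (at x)"
  using bounded_bilinear.has_vector_derivative[OF bb_mm assms] .

lemma cmult_mat: "cmult c X = mat c ** X"
  by (simp add: cmult_def mat_def matrix_matrix_mult_def vec_eq_iff if_distrib if_distribR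
      sum.delta cong: if_cong)

lemma bl_cmult: "bounded_linear (cmult c :: complex^'n^'n \<Rightarrow> _)"
  unfolding cmult_mat[abs_def] by (rule bounded_bilinear.bounded_linear_right[OF bb_mm])

lemma deriv_mpow_ex:
  fixes f :: "real \<Rightarrow> complex^'n^'n"
  assumes "(f has_vector_derivative f') (at x)"
  shows "\<exists>D. ((\<lambda>t. mpow (f t) k) has_vector_derivative D) (at x)"
proof (induction k)
  case 0 then show ?case by (auto intro: has_vector_derivative_const)
next
  case (Suc k)
  then obtain D where "((\<lambda>t. mpow (f t) k) has_vector_derivative D) (at x)" by blast
  from deriv_mm[OF this assms] show ?case by auto
qed

lemma deriv_meval_ex:
  fixes f :: "real \<Rightarrow> complex^'n^'n"
  assumes "(f has_vector_derivative f') (at x)"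
  shows "\<exists>D. ((\<lambda>t. meval p (f t)) has_vector_derivative D) (at x)"
proof -
  have "\<forall>k. \<exists>D. ((\<lambda>t. mpow (f t) k) has_vector_derivative D) (at x)"
    using deriv_mpow_ex[OF assms] by blast
  then obtain D where D: "\<And>k. ((\<lambda>t. mpow (f t) k) has_vector_derivative D k) (at x)"
    by metis
  have "((\<lambda>t. \<Sum>k\<le>degree p. cmult (coeff p k) (mpow (f t) k)) has_vector_derivative
           (\<Sum>k\<le>degree p. cmult (coeff p k) (D k))) (at x)"
    by (intro has_vector_derivative_sum bounded_linear.has_vector_derivative[OF bl_cmult] D)
  then show ?thesis unfolding meval_def by blast
qed

definition ins :: "'d \<Rightarrow> 'a::real_vector \<Rightarrow> 'a^'d" where
  "ins s x = (\<chi> r. if r = s then x else 0)"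

lemma bl_ins: "bounded_linear (ins s :: complex^'n^'n \<Rightarrow> (complex^'n^'n)^'d)"
  unfolding linear_conv_bounded_linear[symmetric]
  by (auto intro!: linearI simp: ins_def vec_eq_iff)

lemma deriv_vec:
  fixes g :: "'d::finite \<Rightarrow> real \<Rightarrow> complex^'n^'n"
  assumes "\<And>s. (g s has_vector_derivative g' s) (at x)"
  shows "((\<lambda>t. \<chi> s. g s t) has_vector_derivative (\<chi> s. g' s)) (at x)"
proof -
  have e: "(\<chi> s. h s) = (\<Sum>s\<in>UNIV. ins s (h s))" for h :: "'d \<Rightarrow> complex^'n^'n"
    by (simp add: vec_eq_iff ins_def)
  have "((\<lambda>t. \<Sum>s\<in>UNIV. ins s (g s t)) has_vector_derivative (\<Sum>s\<in>UNIV. ins s (g' s))) (at x)"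
    by (intro has_vector_derivative_sum bounded_linear.has_vector_derivative[OF bl_ins] assms)
  then show ?thesis by (simp only: e)
qed

lemma deriv_nth:
  fixes \<gamma> :: "real \<Rightarrow> 'a::real_normed_vector^'d"
  assumes "(\<gamma> has_vector_derivative Z) F"
  shows "((\<lambda>t. \<gamma> t $ r) has_vector_derivative Z $ r) F"
  using bounded_linear.has_vector_derivative[OF bounded_linear_vec_nth assms] .

lemma eig_sub:
  fixes M :: "complex^('n::{finite,linorder})^('n::{finite,linorder})"
  assumes UT: "upper_triangular M"
  shows "eigenvalues M \<subseteq> range (\<lambda>i. M$i$i)"
proof
  fix c assume "c \<in> eigenvalues M"
  then obtain v where v: "v \<noteq> 0" "M *v v = c *s v" by (auto simp: eigenvalues_def)
  define S where "S = {i. v$i \<noteq> 0}"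
  have "S \<noteq> {}" using v(1) by (auto simp: S_def vec_eq_iff)
  define k where "k = Max S"
  have kS: "k \<in> S" unfolding k_def using \<open>S \<noteq> {}\<close> by (intro Max_in) auto
  have big: "v$j = 0" if "k < j" for j
  proof (rule ccontr)
    assume "v$j \<noteq> 0" then have "j \<in> S" by (simp add: S_def)
    then have "j \<le> k" unfolding k_def by (intro Max_ge) auto
    with that show False by simp
  qed
  have "(M *v v)$k = M$k$k * v$k"
    unfolding matrix_vector_mult_def vec_lambda_beta
  proof (rule sum_single)
    fix j assume "j \<noteq> k"
    then consider "j < k" | "k < j" by (meson linorder_neq_iff)
    then show "M$k$j * v$j = 0"
      by cases (use UT big in \<open>auto simp: upper_triangular_def\<close>)
  qed
  moreover have "(M *v v)$k = c * v$k" using v(2) by simp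
  ultimately have "c = M$k$k" using kS by (simp add: S_def)
  then show "c \<in> range (\<lambda>i. M$i$i)" by blast
qed

lemma inj_diag:
  fixes M :: "complex^('n::{finite,linorder})^('n::{finite,linorder})"
  assumes UT: "upper_triangular M" and C: "card (eigenvalues M) = CARD('n)"
  shows "inj (\<lambda>i. M$i$i)"
proof -
  have "card (eigenvalues M) \<le> card (range (\<lambda>i. M$i$i))"
    using eig_sub[OF UT] by (intro card_mono) auto
  moreover have "card (range (\<lambda>i. M$i$i)) \<le> CARD('n)" by (rule card_image_le) simp
  ultimately have "card (range (\<lambda>i. M$i$i)) = card (UNIV :: 'n set)" using C by simp
  then show ?thesis by (intro eq_card_imp_inj_on) auto
qed

lemma grp: "(a::'a::ab_group_add) + b = c + d \<Longrightarrow> a - d = c - b"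
  by (simp add: algebra_simps)

lemma tan_sub:
  fixes Q :: "(complex^'n^'n)^'d"
  assumes "Z \<in> tangent_space Vdn Q"
  shows "commutator (Q $ r) (Z $ s) = commutator (Q $ s) (Z $ r)"
proof -
  obtain \<gamma> where g: "\<gamma> 0 = Q" "\<And>t. \<gamma> t \<in> Vdn" "(\<gamma> has_vector_derivative Z) (at 0)"
    using assms by (auto simp: tangent_space_def)
  have dr: "((\<lambda>t. \<gamma> t $ r) has_vector_derivative Z $ r) (at 0)"
    and ds: "((\<lambda>t. \<gamma> t $ s) has_vector_derivative Z $ s) (at 0)"
    using deriv_nth[OF g(3)] by auto
  have 1: "((\<lambda>t. \<gamma> t $ r ** \<gamma> t $ s) has_vector_derivative (Q$r ** Z$s + Z$r ** Q$s)) (at 0)"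
    using deriv_mm[OF dr ds] g(1) by simp
  have 2: "((\<lambda>t. \<gamma> t $ s ** \<gamma> t $ r) has_vector_derivative (Q$s ** Z$r + Z$s ** Q$r)) (at 0)"
    using deriv_mm[OF ds dr] g(1) by simp
  have eqf: "(\<lambda>t. \<gamma> t $ r ** \<gamma> t $ s) = (\<lambda>t. \<gamma> t $ s ** \<gamma> t $ r)"
    using g(2) by (auto simp: Vdn_def)
  have h2: "((\<lambda>t. \<gamma> t $ r ** \<gamma> t $ s) has_vector_derivative (Q$s ** Z$r + Z$s ** Q$r)) (at 0)"
    by (subst eqf) (rule 2)
  have "Q$r ** Z$s + Z$r ** Q$s = Q$s ** Z$r + Z$s ** Q$r"
    by (rule vector_derivative_unique_at[OF 1 h2])
  then have "Q$r ** Z$s - Z$s ** Q$r = Q$s ** Z$r - Z$r ** Q$s"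
    by (rule grp)
  then show ?thesis by (simp add: commutator_def)
qed

lemma tan_ut:
  fixes Q :: "(complex^('n::{finite,linorder})^('n::{finite,linorder}))^'d"
  assumes "Z \<in> tangent_space Tdn Q"
  shows "upper_triangular (Z $ r)"
proof -
  obtain \<gamma> where g: "\<gamma> 0 = Q" "\<And>t. \<gamma> t \<in> Tdn" "(\<gamma> has_vector_derivative Z) (at 0)"
    using assms by (auto simp: tangent_space_def)
  show ?thesis unfolding upper_triangular_def
  proof (intro allI impI)
    fix i j :: 'n assume "j < i"
    have d: "((\<lambda>t. \<gamma> t $ r $ i $ j) has_vector_derivative Z $ r $ i $ j) (at 0)"
      using deriv_nth[OF deriv_nth[OF deriv_nth[OF g(3)]]] .
    have "(\<lambda>t. \<gamma> t $ r $ i $ j) = (\<lambda>t. 0)"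
      using g(2) \<open>j < i\<close> by (auto simp: Tdn_def upper_triangular_def)
    with d have "((\<lambda>t. 0) has_vector_derivative Z $ r $ i $ j) (at 0)" by simp
    from vector_derivative_unique_at[OF this has_vector_derivative_const]
    show "Z $ r $ i $ j = 0" .
  qed
qed

lemma tangent_mono: "S \<subseteq> T \<Longrightarrow> tangent_space S x \<subseteq> tangent_space T x"
  unfolding tangent_space_def by blast

lemma Tdn_sub: "Tdn \<subseteq> Vdn"
  by (auto simp: Tdn_def)

lemma comm4:
  fixes X1 X2 Y1 Y2 :: "complex^'n^'n"
  assumes "X1 ** Y1 = Y1 ** X1" "X1 ** Y2 = Y2 ** X1" "X2 ** Y1 = Y1 ** X2" "X2 ** Y2 = Y2 ** X2"
  shows "(X1 + X2) ** (Y1 + Y2) = (Y1 + Y2) ** (X1 + X2)"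
  by (simp add: matrix_add_ldistrib matrix_add_rdistrib' assms add_ac)

lemma comm_scale:
  fixes X Y :: "complex^'n^'n"
  assumes "X ** Y = Y ** X"
  shows "(c *\<^sub>R X) ** (c' *\<^sub>R Y) = (c' *\<^sub>R Y) ** (c *\<^sub>R X)"
  using assms by (simp add: scalar_matrix_assoc[symmetric] matrix_scalar_ac)

lemma comm_poly:
  fixes M :: "complex^'n^'n"
  shows "(meval a M + c *\<^sub>R meval b M) ** (meval a' M + c' *\<^sub>R meval b' M)
       = (meval a' M + c' *\<^sub>R meval b' M) ** (meval a M + c *\<^sub>R meval b M)"
proof (rule comm4)
  show "meval a M ** meval a' M = meval a' M ** meval a M" by (rule meval_comm)
  show "meval a M ** (c' *\<^sub>R meval b' M) = (c' *\<^sub>R meval b' M) ** meval a M"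
    using comm_scale[OF meval_comm[of a M b'], of 1 c'] by simp
  show "(c *\<^sub>R meval b M) ** meval a' M = meval a' M ** (c *\<^sub>R meval b M)"
    using comm_scale[OF meval_comm[of b M a'], of c 1] by simp
  show "(c *\<^sub>R meval b M) ** (c' *\<^sub>R meval b' M) = (c' *\<^sub>R meval b' M) ** (c *\<^sub>R meval b M)"
    using comm_scale[OF meval_comm[of b M b']] by simp
qed

locale setting =
  fixes Q :: "(complex^('n::{finite,linorder})^('n::{finite,linorder}))^('d::finite)"
    and r0 :: 'd
  assumes QT: "Q \<in> Tdn" and QG: "Q \<in> Vdn_gen"
begin

definition "A = Q $ r0"

lemma UTQ: "upper_triangular (Q $ s)"
  using QT by (simp add: Tdn_def)

lemma UTA: "upper_triangular A"
  by (simp add: A_def UTQ)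

lemma injA: "inj (\<lambda>i. A$i$i)"
  using QG UTA by (intro inj_diag) (auto simp: Vdn_gen_def A_def)

lemma commQ: "Q $ r ** Q $ s = Q $ s ** Q $ r"
  using QT by (simp add: Tdn_def Vdn_def)

definition "P s = (if s = r0 then [:0,1:] else (SOME p. Q $ s = meval p A))"

lemma PQ: "meval (P s) A = Q $ s"
proof (cases "s = r0")
  case True then show ?thesis by (simp add: P_def meval_X A_def)
next
  case False
  have "\<exists>p. Q $ s = meval p A"
    by (rule commutant[OF UTA injA]) (simp add: A_def commQ)
  from someI_ex[OF this] show ?thesis using False unfolding P_def by simp
qed

definition "base W s t = meval (P s) (A + t *\<^sub>R W)"

definition "T W s = vector_derivative (base W s) (at 0)"

lemma line_deriv: "((\<lambda>t. A + t *\<^sub>R W) has_vector_derivative W) (at x)"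
  by (auto intro!: derivative_eq_intros)

lemma base_deriv: "(base W s has_vector_derivative T W s) (at 0)"
proof -
  obtain D where "((\<lambda>t. meval (P s) (A + t *\<^sub>R W)) has_vector_derivative D) (at 0)"
    using deriv_meval_ex[OF line_deriv] by blast
  then have "base W s differentiable (at 0)"
    unfolding base_def by (rule differentiableI_vector)
  then show ?thesis unfolding T_def using vector_derivative_works by blast
qed

lemma T_r0: "T W r0 = W"
proof -
  have "base W r0 = (\<lambda>t. A + t *\<^sub>R W)"
    by (simp add: base_def P_def meval_X fun_eq_iff)
  then show ?thesis
    using base_deriv[of W r0] line_deriv[of W 0] vector_derivative_unique_at by metis
qed

definition "curve W q t = (\<chi> s. base W s t + t *\<^sub>R meval (q s) (A + t *\<^sub>R W))"

lemma curve_deriv: "(curve W q has_vector_derivative (\<chi> s. T W s + meval (q s) A)) (at 0)"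
  unfolding curve_def
proof (rule deriv_vec)
  fix s
  obtain D where D: "((\<lambda>t. meval (q s) (A + t *\<^sub>R W)) has_vector_derivative D) (at 0)"
    using deriv_meval_ex[OF line_deriv] by blast
  have "((\<lambda>t. t *\<^sub>R meval (q s) (A + t *\<^sub>R W)) has_vector_derivative
          (0 *\<^sub>R D + 1 *\<^sub>R meval (q s) (A + 0 *\<^sub>R W))) (at 0)"
    by (rule has_vector_derivative_scaleR[OF _ D]) (auto intro!: derivative_eq_intros)
  then have "((\<lambda>t. t *\<^sub>R meval (q s) (A + t *\<^sub>R W)) has_vector_derivative meval (q s) A) (at 0)"
    by simp
  from has_vector_derivative_add[OF base_deriv this]
  show "((\<lambda>t. base W s t + t *\<^sub>R meval (q s) (A + t *\<^sub>R W)) has_vector_derivative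
          T W s + meval (q s) A) (at 0)" .
qed

lemma curve_0: "curve W q 0 = Q"
  by (simp add: curve_def base_def PQ vec_eq_iff)

lemma curve_V: "curve W q t \<in> Vdn"
  unfolding Vdn_def
proof (intro CollectI allI)
  fix r s
  show "curve W q t $ r ** curve W q t $ s = curve W q t $ s ** curve W q t $ r"
    unfolding curve_def base_def vec_lambda_beta by (rule comm_poly)
qed

lemma curve_T: "upper_triangular W \<Longrightarrow> curve W q t \<in> Tdn"
  unfolding Tdn_def using curve_V
  by (auto simp: curve_def base_def intro!: ut_add ut_scaleR ut_meval UTA)

lemma curve_tan: "(\<chi> s. T W s + meval (q s) A) \<in> tangent_space Vdn Q"
  unfolding tangent_space_def using curve_0 curve_V curve_deriv by blast

lemma curve_tanT: "upper_triangular W \<Longrightarrow> (\<chi> s. T W s + meval (q s) A) \<in> tangent_space Tdn Q"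
  unfolding tangent_space_def using curve_0 curve_T curve_deriv by blast

lemma T_tan: "(\<chi> s. T W s) \<in> tangent_space Vdn Q"
  using curve_tan[of W "\<lambda>_. 0"] by (simp add: meval_0)

lemma T_comm: "commutator A (T W s) = commutator (Q $ s) W"
  using tan_sub[OF T_tan, where r=r0 and s=s] by (simp add: A_def T_r0)

definition "E = {Z. \<forall>r s. r \<noteq> s \<longrightarrow> commutator (Q $ r) (Z $ s) = commutator (Q $ s) (Z $ r)}"
definition "ET = {Z. (\<forall>r. upper_triangular (Z $ r)) \<and>
               (\<forall>r s. r \<noteq> s \<longrightarrow> commutator (Q $ r) (Z $ s) = commutator (Q $ s) (Z $ r))}"

lemma commutator_diff: "commutator X (Y - Y') = commutator X Y - commutator X Y'"
  by (simp add: commutator_def matrix_diff_ldistrib matrix_diff_rdistrib algebra_simps)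

lemma E_decomp:
  assumes "Z \<in> E"
  shows "\<exists>q. Z = (\<chi> s. T (Z $ r0) s + meval (q s) A)"
proof -
  have "\<exists>q. Z $ s - T (Z $ r0) s = meval q A" for s
  proof (cases "s = r0")
    case True then show ?thesis by (intro exI[of _ 0]) (simp add: T_r0 meval_0)
  next
    case False
    have "commutator A (Z $ s) = commutator (Q $ s) (Z $ r0)"
      using assms False by (auto simp: E_def A_def)
    then have "commutator A (Z $ s - T (Z $ r0) s) = 0"
      by (simp add: commutator_diff T_comm)
    then have "A ** (Z $ s - T (Z $ r0) s) = (Z $ s - T (Z $ r0) s) ** A"
      by (simp add: commutator_def)
    then show ?thesis using commutant[OF UTA injA] by blast
  qed
  then obtain q where q: "\<And>s. Z $ s - T (Z $ r0) s = meval (q s) A" by metis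
  have "Z $ s = T (Z $ r0) s + meval (q s) A" for s
    using q[of s] by (simp add: diff_eq_eq add.commute)
  then have "Z = (\<chi> s. T (Z $ r0) s + meval (q s) A)"
    by (simp add: vec_eq_iff)
  then show ?thesis by blast
qed

lemma tangent_V: "tangent_space Vdn Q = E"
proof
  show "tangent_space Vdn Q \<subseteq> E" using tan_sub by (auto simp: E_def)
  show "E \<subseteq> tangent_space Vdn Q"
  proof
    fix Z assume "Z \<in> E"
    from E_decomp[OF this] obtain q where "Z = (\<chi> s. T (Z $ r0) s + meval (q s) A)" by blast
    with curve_tan[of "Z $ r0" q] show "Z \<in> tangent_space Vdn Q" by simp
  qed
qed

lemma tangent_T: "tangent_space Tdn Q = ET"
proof
  show "tangent_space Tdn Q \<subseteq> ET"
  proof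
    fix Z assume Z: "Z \<in> tangent_space Tdn Q"
    then have Z': "Z \<in> tangent_space Vdn Q" using tangent_mono[OF Tdn_sub] by blast
    show "Z \<in> ET" unfolding ET_def using tan_ut[OF Z] tan_sub[OF Z'] by blast
  qed
  show "ET \<subseteq> tangent_space Tdn Q"
  proof
    fix Z assume Z: "Z \<in> ET"
    then have "Z \<in> E" by (auto simp: E_def ET_def)
    moreover have "upper_triangular (Z $ r0)" using Z by (auto simp: ET_def)
    moreover from E_decomp[OF \<open>Z \<in> E\<close>] obtain q where "Z = (\<chi> s. T (Z $ r0) s + meval (q s) A)" by blast
    ultimately show "Z \<in> tangent_space Tdn Q"
      using curve_tanT[of "Z $ r0" q] by simp
  qed
qed

end

type_synonym ('n,'d) tgt = "(complex^'n^'n) \<times> ((complex^'n)^'d)"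

definition R0 :: "'d \<Rightarrow> ('n::finite,'d::finite) tgt set" where
  "R0 r0 = (\<lambda>u. (0, axis r0 u)) ` Basis"

definition RL :: "('n::{finite,linorder},'d::finite) tgt set" where
  "RL = (\<lambda>((i,j),u). (axis i (axis j u), 0)) ` ({(i,j). j < i} \<times> Basis)"

lemma R0_Basis: "R0 r0 \<subseteq> Basis"
  unfolding R0_def Basis_prod_def by (auto intro!: imageI)

lemma RL_Basis: "RL \<subseteq> Basis"
  unfolding RL_def Basis_prod_def by (auto intro!: imageI)

lemma Basis_nz: "u \<in> Basis \<Longrightarrow> u \<noteq> 0"
  by auto

lemma card_R0: "card (R0 r0 :: ('n::finite,'d::finite) tgt set) = 2 * CARD('n)"
proof -
  have "inj_on (\<lambda>u. (0::complex^'n^'n, axis r0 u :: (complex^'n)^'d)) Basis"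
    by (auto simp: inj_on_def axis_eq_axis)
  then have "card (R0 r0 :: ('n,'d) tgt set) = card (Basis :: (complex^'n) set)"
    unfolding R0_def by (rule card_image)
  then show ?thesis by simp
qed

lemma card_L: "2 * card {(i,j::'n::{finite,linorder}). j < i} + CARD('n) = CARD('n) * CARD('n)"
proof -
  define L where "L = {(i,j::'n). j < i}"
  define L' where "L' = {(i,j::'n). i < j}"
  define Dg where "Dg = (\<lambda>i::'n. (i,i)) ` UNIV"
  have U: "(UNIV :: ('n \<times> 'n) set) = L \<union> L' \<union> Dg"
    by (auto simp: L_def L'_def Dg_def)
  have "card (UNIV :: ('n \<times> 'n) set) = card (L \<union> L') + card Dg"
    unfolding U by (rule card_Un_disjoint) (auto simp: L_def L'_def Dg_def)
  also have "card (L \<union> L') = card L + card L'"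
    by (rule card_Un_disjoint) (auto simp: L_def L'_def)
  also have "L' = prod.swap ` L" by (auto simp: L_def L'_def image_iff)
  also have "card (prod.swap ` L) = card L" by (rule card_image) (auto simp: inj_on_def)
  also have "card Dg = CARD('n)" unfolding Dg_def by (rule card_image) (simp add: inj_on_def)
  finally have "card (UNIV :: ('n \<times> 'n) set) = 2 * card L + CARD('n)" by simp
  moreover have "card (UNIV :: ('n \<times> 'n) set) = CARD('n) * CARD('n)"
    by (simp flip: UNIV_Times_UNIV add: card_cartesian_product)
  ultimately show ?thesis by (simp add: L_def)
qed

lemma card_RL: "card (RL :: ('n::{finite,linorder},'d::finite) tgt set) = 2 * card {(i,j::'n). j < i}"
proof -
  have "inj_on (\<lambda>((i,j),u). (axis i (axis j u) :: complex^('n::{finite,linorder})^('n::{finite,linorder}), 0 :: (complex^('n::{finite,linorder}))^('d::finite)))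
          ({(i,j::'n::{finite,linorder}). j < i} \<times> (Basis :: complex set))"
    by (auto simp: inj_on_def axis_eq_axis)
  then have "card (RL :: ('n,'d) tgt set) = card ({(i,j::'n). j < i} \<times> (Basis :: complex set))"
    unfolding RL_def by (rule card_image)
  then show ?thesis by (simp add: card_cartesian_product)
qed

lemma R0_RL_disj: "R0 r0 \<inter> RL = {}"
  by (auto simp: R0_def RL_def axis_eq_axis)

lemma set0_eq: "{x :: ('n::finite,'d::finite) tgt. snd x $ r0 = 0}
   = {x. \<forall>b\<in>Basis. b \<notin> Basis - R0 r0 \<longrightarrow> x \<bullet> b = 0}"
proof -
  have "(\<forall>b\<in>Basis. b \<notin> Basis - R0 r0 \<longrightarrow> x \<bullet> b = 0) \<longleftrightarrow> (\<forall>b\<in>R0 r0. x \<bullet> b = 0)" for x :: "('n,'d) tgt"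
    using R0_Basis by blast
  also have "(\<forall>b\<in>R0 r0. x \<bullet> b = 0) \<longleftrightarrow> (\<forall>u\<in>Basis. snd x $ r0 \<bullet> u = 0)" for x :: "('n,'d) tgt"
    by (simp add: R0_def inner_Pair_0 inner_axis)
  also have "\<dots> x \<longleftrightarrow> snd x $ r0 = 0" for x :: "('n,'d) tgt"
    by (rule euclidean_all_zero_iff)
  finally show ?thesis by auto
qed

lemma setT_pt:
  fixes x :: "('n::{finite,linorder},'d::finite) tgt"
  shows "(\<forall>b\<in>Basis. b \<notin> Basis - (R0 r0 \<union> RL) \<longrightarrow> x \<bullet> b = 0) \<longleftrightarrow>
         upper_triangular (fst x) \<and> snd x $ r0 = 0"
proof -
  have "(\<forall>b\<in>Basis. b \<notin> Basis - (R0 r0 \<union> RL) \<longrightarrow> x \<bullet> b = 0) \<longleftrightarrow>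
        (\<forall>b\<in>R0 r0. x \<bullet> b = 0) \<and> (\<forall>b\<in>RL. x \<bullet> b = 0)"
    using R0_Basis RL_Basis by blast
  moreover have "(\<forall>b\<in>R0 r0. x \<bullet> b = 0) \<longleftrightarrow> (\<forall>u\<in>Basis. snd x $ r0 \<bullet> u = 0)"
    by (simp add: R0_def inner_Pair_0 inner_axis)
  moreover have "(\<forall>u\<in>Basis. snd x $ r0 \<bullet> u = 0) \<longleftrightarrow> snd x $ r0 = 0"
    by (rule euclidean_all_zero_iff)
  moreover have "(\<forall>b\<in>RL. x \<bullet> b = 0) \<longleftrightarrow> (\<forall>i j. j < i \<longrightarrow> (\<forall>u\<in>Basis. fst x $ i $ j \<bullet> u = 0))"
    by (auto simp: RL_def inner_Pair_0 inner_axis)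
  moreover have "(\<forall>i j. j < i \<longrightarrow> (\<forall>u\<in>Basis. fst x $ i $ j \<bullet> u = (0::real))) \<longleftrightarrow> upper_triangular (fst x)"
    by (simp add: upper_triangular_def euclidean_all_zero_iff)
  ultimately show ?thesis by blast
qed

lemma setT_eq: "{x :: ('n::{finite,linorder},'d::finite) tgt. upper_triangular (fst x) \<and> snd x $ r0 = 0}
   = {x. \<forall>b\<in>Basis. b \<notin> Basis - (R0 r0 \<union> RL) \<longrightarrow> x \<bullet> b = 0}"
  using setT_pt by blast

lemma dim_set0: "dim {x :: ('n::finite,'d::finite) tgt. snd x $ r0 = 0}
   = 2 * CARD('n) * CARD('n) + 2 * CARD('d) * CARD('n) - 2 * CARD('n)"
proof -
  have "dim {x :: ('n,'d) tgt. snd x $ r0 = 0} = card (Basis - R0 r0 :: ('n,'d) tgt set)"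
    unfolding set0_eq by (rule dim_substandard) auto
  also have "\<dots> = card (Basis :: ('n,'d) tgt set) - card (R0 r0 :: ('n,'d) tgt set)"
    by (rule card_Diff_subset) (auto simp: R0_Basis intro: finite_subset[OF R0_Basis])
  finally show ?thesis by (simp add: card_R0 algebra_simps)
qed

lemma dim_setT: "dim {x :: ('n::{finite,linorder},'d::finite) tgt. upper_triangular (fst x) \<and> snd x $ r0 = 0}
   = 2 * CARD('n) * CARD('n) + 2 * CARD('d) * CARD('n) - (2 * CARD('n) + 2 * card {(i,j::'n). j < i})"
proof -
  have "dim {x :: ('n,'d) tgt. upper_triangular (fst x) \<and> snd x $ r0 = 0}
      = card (Basis - (R0 r0 \<union> RL) :: ('n,'d) tgt set)"
    unfolding setT_eq by (rule dim_substandard) auto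
  also have "\<dots> = card (Basis :: ('n,'d) tgt set) - card (R0 r0 \<union> RL :: ('n,'d) tgt set)"
    by (rule card_Diff_subset) (use R0_Basis RL_Basis finite_subset[OF R0_Basis] finite_subset[OF RL_Basis] in auto)
  also have "card (R0 r0 \<union> RL :: ('n,'d) tgt set) = card (R0 r0 :: ('n,'d) tgt set) + card (RL :: ('n,'d) tgt set)"
    by (rule card_Un_disjoint) (use R0_Basis RL_Basis R0_RL_disj[of r0] finite_subset[OF R0_Basis] finite_subset[OF RL_Basis] in auto)
  finally show ?thesis by (simp add: card_R0 card_RL algebra_simps)
qed

lemma commutator_add: "commutator X (Y + Y') = commutator X Y + commutator X Y'"
  by (simp add: commutator_def matrix_add_ldistrib matrix_add_rdistrib' algebra_simps)

lemma commutator_scaleR: "commutator X (c *\<^sub>R Y) = c *\<^sub>R commutator X Y"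
  by (simp add: commutator_def scalar_matrix_assoc[symmetric] matrix_scalar_ac scaleR_diff_right)

lemma commutator_0: "commutator X 0 = 0"
  by (simp add: commutator_def)

context setting
begin

definition fmap :: "(complex^('n::{finite,linorder})^('n::{finite,linorder}))^('d::finite) \<Rightarrow> ('n,'d) tgt" where
  "fmap Z = (Z $ r0, \<chi> s. if s = r0 then 0 else diagv (Z $ s))"

lemma linear_fmap: "linear fmap"
  by (rule linearI) (auto simp: fmap_def diagv_def vec_eq_iff)

lemma subspace_E: "subspace E"
  unfolding subspace_def E_def
  by (auto simp: commutator_add commutator_scaleR commutator_0)

lemma subspace_ET: "subspace ET"
  unfolding subspace_def ET_def
  by (auto simp: commutator_add commutator_scaleR commutator_0 ut_add ut_scaleR ut_zero)

lemma comm_diag_zero: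
  assumes C: "A ** B = B ** A" and D: "\<And>i. B$i$i = 0"
  shows "B = 0"
proof -
  have UB: "upper_triangular B"
    using comm_lower_zero[OF UTA injA C] by (auto simp: upper_triangular_def)
  have "B$i$j = 0" for i j
  proof -
    consider "i < j" | "i = j" | "j < i" by (meson linorder_neq_iff)
    then show ?thesis
      by cases (use comm_strict_zero[OF UTA injA C UB D] D UB in \<open>auto simp: upper_triangular_def\<close>)
  qed
  then show ?thesis by (simp add: vec_eq_iff)
qed

lemma inj_fmap: "inj_on fmap E"
proof (rule inj_onI)
  fix Z Z' assume Z: "Z \<in> E" and Z': "Z' \<in> E" and eq: "fmap Z = fmap Z'"
  define D where "D = Z - Z'"
  have DE: "D \<in> E" unfolding D_def using subspace_E Z Z' by (rule subspace_diff)
  have D0: "D $ r0 = 0" using eq by (simp add: fmap_def D_def)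
  have "D $ s = 0" for s
  proof (cases "s = r0")
    case True then show ?thesis using D0 by simp
  next
    case False
    have "snd (fmap Z) $ s = snd (fmap Z') $ s" using eq by simp
    then have "diagv (Z $ s) = diagv (Z' $ s)" using False by (simp add: fmap_def)
    then have dg: "D $ s $ i $ i = 0" for i by (simp add: D_def diagv_def vec_eq_iff)
    have "commutator A (D $ s) = commutator (Q $ s) (D $ r0)"
      using DE False by (auto simp: E_def A_def)
    then have "commutator A (D $ s) = 0" by (simp add: D0 commutator_0)
    then have "A ** D $ s = D $ s ** A" by (simp add: commutator_def)
    then show ?thesis using comm_diag_zero dg by blast
  qed
  then have "D = 0" by (simp add: vec_eq_iff)
  then show "Z = Z'" by (simp add: D_def)
qed

lemma inj_fmapT: "inj_on fmap ET"
  using inj_fmap by (rule inj_on_subset) (auto simp: E_def ET_def)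

lemma surj_aux:
  assumes c0: "c $ r0 = 0"
  shows "\<exists>q. fmap (\<chi> s. T W s + meval (q s) A) = (W, c)"
proof -
  have "\<exists>p. \<forall>i. poly p (A$i$i) = c $ s $ i - T W s $ i $ i" for s by (rule lagrange[OF injA])
  then have "\<forall>s. \<exists>p. s \<noteq> r0 \<longrightarrow> (\<forall>i. poly p (A$i$i) = c $ s $ i - T W s $ i $ i)"
    by blast
  from choice[OF this] obtain q0 where q0': "\<forall>s. s \<noteq> r0 \<longrightarrow> (\<forall>i. poly (q0 s) (A$i$i) = c $ s $ i - T W s $ i $ i)"
    by blast
  then have q0: "\<And>s i. s \<noteq> r0 \<Longrightarrow> poly (q0 s) (A$i$i) = c $ s $ i - T W s $ i $ i" by blast
  define q where "q s = (if s = r0 then 0 else q0 s)" for s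
  have "fmap (\<chi> s. T W s + meval (q s) A) = (W, c)"
    using c0 by (auto simp: fmap_def q_def T_r0 meval_0 diagv_def vec_eq_iff meval_diag[OF UTA] q0)
  then show ?thesis by blast
qed

lemma image_E: "fmap ` E = {x. snd x $ r0 = 0}"
proof
  show "fmap ` E \<subseteq> {x. snd x $ r0 = 0}" by (auto simp: fmap_def)
  show "{x. snd x $ r0 = 0} \<subseteq> fmap ` E"
  proof
    fix x :: "('n,'d) tgt" assume "x \<in> {x. snd x $ r0 = 0}"
    then obtain W c where x: "x = (W, c)" "c $ r0 = 0" by (cases x) auto
    obtain q where e: "fmap (\<chi> s. T W s + meval (q s) A) = (W, c)" using surj_aux[OF x(2)] by blast
    have m: "(\<chi> s. T W s + meval (q s) A) \<in> E" using curve_tan tangent_V by blast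
    show "x \<in> fmap ` E" unfolding x(1) by (rule image_eqI[where f=fmap, OF e[symmetric] m])
  qed
qed

lemma image_ET: "fmap ` ET = {x. upper_triangular (fst x) \<and> snd x $ r0 = 0}"
proof
  show "fmap ` ET \<subseteq> {x. upper_triangular (fst x) \<and> snd x $ r0 = 0}" by (auto simp: fmap_def ET_def)
  show "{x. upper_triangular (fst x) \<and> snd x $ r0 = 0} \<subseteq> fmap ` ET"
  proof
    fix x :: "('n,'d) tgt" assume "x \<in> {x. upper_triangular (fst x) \<and> snd x $ r0 = 0}"
    then obtain W c where x: "x = (W, c)" "c $ r0 = 0" "upper_triangular W" by (cases x) auto
    obtain q where e: "fmap (\<chi> s. T W s + meval (q s) A) = (W, c)" using surj_aux[OF x(2)] by blast
    have m: "(\<chi> s. T W s + meval (q s) A) \<in> ET" using curve_tanT[OF x(3)] tangent_T by blast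
    show "x \<in> fmap ` ET" unfolding x(1) by (rule image_eqI[where f=fmap, OF e[symmetric] m])
  qed
qed

lemma dim_E: "dim E = 2 * CARD('n) * CARD('n) + 2 * CARD('d) * CARD('n) - 2 * CARD('n)"
proof -
  have "dim (fmap ` E) = dim E"
    by (rule dim_image_eq[OF linear_fmap]) (simp add: span_eq_iff[THEN iffD2, OF subspace_E] inj_fmap)
  then show ?thesis unfolding image_E dim_set0 by simp
qed

lemma dim_ET: "dim ET = 2 * CARD('n) * CARD('n) + 2 * CARD('d) * CARD('n) - (2 * CARD('n) + 2 * card {(i,j::'n). j < i})"
proof -
  have "dim (fmap ` ET) = dim ET"
    by (rule dim_image_eq[OF linear_fmap]) (simp add: span_eq_iff[THEN iffD2, OF subspace_ET] inj_fmapT)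
  then show ?thesis unfolding image_ET dim_setT by simp
qed

end

theorem lemma4p2:
  fixes Q :: "(complex^('n::{finite,linorder})^('n::{finite,linorder}))^('d::finite)"
  assumes "Q \<in> Tdn" and "Q \<in> Vdn_gen"
  shows "(tangent_space Vdn Q =
           {Z. \<forall>r s. r \<noteq> s \<longrightarrow> commutator (Q $ r) (Z $ s) = commutator (Q $ s) (Z $ r)}) \<and>
         (tangent_space Tdn Q =
           {Z. (\<forall>r. upper_triangular (Z $ r)) \<and>
               (\<forall>r s. r \<noteq> s \<longrightarrow> commutator (Q $ r) (Z $ s) = commutator (Q $ s) (Z $ r))}) \<and>
         (dim (tangent_space Vdn Q)
           = 2 * CARD('n)^2 + 2 * (CARD('d) - 1) * CARD('n)) \<and>
         (dim (tangent_space Tdn Q)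
           = CARD('n)^2 + (2 * CARD('d) - 1) * CARD('n))"
proof -
  obtain r0 :: 'd where True by blast
  interpret setting Q r0 using assms by unfold_locales
  obtain d' where d: "CARD('d) = Suc d'"
  proof -
    have "CARD('d) > 0" by simp
    then show ?thesis using that gr0_implies_Suc by blast
  qed
  define n where "n = CARD('n)"
  define L where "L = card {(i,j::'n). j < i}"
  have cL: "2 * L + n = n * n" unfolding L_def n_def by (rule card_L)
  have 1: "dim (tangent_space Vdn Q) = 2 * CARD('n)^2 + 2 * (CARD('d) - 1) * CARD('n)"
    unfolding tangent_V dim_E d n_def[symmetric] by (simp add: power2_eq_square algebra_simps)
  have 2: "dim (tangent_space Tdn Q) = CARD('n)^2 + (2 * CARD('d) - 1) * CARD('n)"
    unfolding tangent_T dim_ET d n_def[symmetric] L_def[symmetric]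
    using cL by (simp add: power2_eq_square algebra_simps)
  show ?thesis using tangent_V tangent_T 1 2 unfolding E_def ET_def by blast
qed

end
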